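(* Let $\varphi$ be a quasi-concave function on $\Omega$ (where $\Omega=(0,1)$ or $\Omega=(0,\infty)$) such that $\lim_{t\to0^+}t/\varphi(t)=0$. Then the Marcinkiewicz space $M_\varphi$ on $\Omega$ contains a lattice isometric copy of $\ell_\infty$.
   Context: A function $\varphi$ on $\Omega$ is quasi-concave if $\varphi(0)=0$, $\varphi$ is positive and non-decreasing on $\Omega$, and $t\mapsto\varphi(t)/t$ is non-increasing. The Marcinkiewicz space $M_\varphi$ is the space of measurable $f$ on $\Omega$ with $\|f\|_{M_\varphi}=\sup_{t\in\Omega}\frac{\varphi(t)}{t}\int_0^tf^*(s)\,ds<\infty$, where $f^*$ is the non-increasing rearrangement of $|f|$ with respect to Lebesgue measure. "Contains a lattice isometric copy of $\ell_\infty$" means there is a linear isometric embedding $T:\ell_\infty\to M_\varphi$ which is a lattice homomorphism. *)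

theory Defs
  imports "HOL-Analysis.Analysis"
begin

definition quasi_concave_on :: "real set \<Rightarrow> (real \<Rightarrow> real) \<Rightarrow> bool" where
  "quasi_concave_on \<Omega> \<phi> \<longleftrightarrow>
     \<phi> 0 = 0 \<and> (\<forall>t\<in>\<Omega>. \<phi> t > 0) \<and> mono_on \<Omega> \<phi> \<and>
     (\<forall>s\<in>\<Omega>. \<forall>t\<in>\<Omega>. s \<le> t \<longrightarrow> \<phi> t / t \<le> \<phi> s / s)"

definition rearr :: "real set \<Rightarrow> (real \<Rightarrow> real) \<Rightarrow> real \<Rightarrow> ennreal" where
  "rearr \<Omega> f t = Inf {s::ennreal. emeasure lebesgue {x\<in>\<Omega>. s < ennreal \<bar>f x\<bar>} \<le> ennreal t}"

definition marc_norm :: "real set \<Rightarrow> (real \<Rightarrow> real) \<Rightarrow> (real \<Rightarrow> real) \<Rightarrow> ennreal" where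
  "marc_norm \<Omega> \<phi> f = (SUP t\<in>\<Omega>. ennreal (\<phi> t / t) * set_nn_integral lborel {0<..t} (rearr \<Omega> f))"

definition marc_space :: "real set \<Rightarrow> (real \<Rightarrow> real) \<Rightarrow> (real \<Rightarrow> real) set" where
  "marc_space \<Omega> \<phi> = {f. set_borel_measurable lebesgue \<Omega> f \<and> marc_norm \<Omega> \<phi> f < top}"

definition linf :: "(nat \<Rightarrow> real) set" where
  "linf = {x. bounded (range x)}"

definition linf_norm :: "(nat \<Rightarrow> real) \<Rightarrow> real" where
  "linf_norm x = (SUP n. \<bar>x n\<bar>)"

text \<open>Elements of
  M_phi are identified when equal a.e. on \<Omega>, so the algebraic identities are a.e. on \<Omega>.\<close>
definition lattice_isometric_embedding ::
  "real set \<Rightarrow> (real \<Rightarrow> real) \<Rightarrow> ((nat \<Rightarrow> real) \<Rightarrow> (real \<Rightarrow> real)) \<Rightarrow> bool" where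
  "lattice_isometric_embedding \<Omega> \<phi> T \<longleftrightarrow>
     (\<forall>x\<in>linf. T x \<in> marc_space \<Omega> \<phi>) \<and>
     (\<forall>x\<in>linf. \<forall>y\<in>linf. \<forall>a b::real.
        AE s in lebesgue. s \<in> \<Omega> \<longrightarrow> T (\<lambda>n. a * x n + b * y n) s = a * T x s + b * T y s) \<and>
     (\<forall>x\<in>linf. \<forall>y\<in>linf.
        AE s in lebesgue. s \<in> \<Omega> \<longrightarrow> T (\<lambda>n. max (x n) (y n)) s = max (T x s) (T y s)) \<and>
     (\<forall>x\<in>linf. marc_norm \<Omega> \<phi> (T x) = ennreal (linf_norm x))"

end

theory Submission
  imports Defs
begin

definition good :: "(nat \<Rightarrow> real) \<Rightarrow> bool" where
  "good s \<longleftrightarrow> (\<forall>i. 0 < s i \<and> s (Suc i) < s i) \<and> s \<longlonglongrightarrow> 0"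

definition blkJ :: "(nat \<Rightarrow> real) \<Rightarrow> real \<Rightarrow> nat" where
  "blkJ s x = (LEAST i. s (Suc i) < x)"

definition blkk :: "(nat \<Rightarrow> real) \<Rightarrow> (nat \<Rightarrow> real) \<Rightarrow> real \<Rightarrow> real" where
  "blkk s c x = (if 0 < x \<and> x \<le> s 0 then c (blkJ s x) else 0)"

definition Tmap :: "(nat \<Rightarrow> real) \<Rightarrow> (nat \<Rightarrow> real) \<Rightarrow> (nat \<Rightarrow> real) \<Rightarrow> real \<Rightarrow> real" where
  "Tmap s c y x = (if 0 < x \<and> x \<le> s 0 then y (fst (prod_decode (blkJ s x))) * c (blkJ s x) else 0)"

lemma good_dec: assumes "good s" "i \<le> j" shows "s j \<le> s i"
proof -
  have "decseq s" using assms(1) unfolding good_def by (intro decseq_SucI) (auto intro: less_imp_le)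
  thus ?thesis using assms(2) by (auto simp: decseq_def)
qed

lemma blkJ_eq: assumes "good s" "s (Suc j) < x" "x \<le> s j" shows "blkJ s x = j"
  unfolding blkJ_def
proof (rule Least_equality)
  show "s (Suc j) < x" by fact
  fix i assume "s (Suc i) < x"
  show "j \<le> i"
  proof (rule ccontr)
    assume "\<not> j \<le> i" hence "Suc i \<le> j" by simp
    hence "s j \<le> s (Suc i)" using good_dec[OF assms(1)] by blast
    thus False using \<open>s (Suc i) < x\<close> assms(3) by simp
  qed
qed

lemma blkJ_in: assumes "good s" "0 < x" "x \<le> s 0"
  shows "s (Suc (blkJ s x)) < x \<and> x \<le> s (blkJ s x)"
proof -
  have "\<exists>i. s (Suc i) < x"
  proof -
    have "eventually (\<lambda>n. s n < x) sequentially"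
      using assms(1,2) unfolding good_def by (auto intro: order_tendstoD)
    then obtain n where "s n < x" by (auto simp: eventually_sequentially)
    hence "s (Suc n) < x" using good_dec[OF assms(1), of n "Suc n"] by simp
    thus ?thesis by blast
  qed
  hence 1: "s (Suc (blkJ s x)) < x" unfolding blkJ_def by (rule LeastI_ex)
  have "x \<le> s (blkJ s x)"
  proof (cases "blkJ s x")
    case 0 thus ?thesis using assms by simp
  next
    case (Suc m)
    hence "m < blkJ s x" by simp
    hence "\<not> s (Suc m) < x" unfolding blkJ_def by (rule not_less_Least)
    thus ?thesis using Suc by simp
  qed
  with 1 show ?thesis by blast
qed

lemma blkJ_meas_borel: "blkJ s \<in> measurable borel (count_space UNIV)"
  unfolding blkJ_def
proof (rule measurable_Least)
  fix i
  show "(\<lambda>x::real. s (Suc i) < x) \<in> measurable borel (count_space UNIV)" by measurable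
qed

lemma blkJ_meas: "blkJ s \<in> measurable lebesgue (count_space UNIV)"
proof -
  have "blkJ s \<in> measurable lborel (count_space UNIV)" using blkJ_meas_borel by simp
  thus ?thesis by (rule measurable_completion)
qed

lemma blkk_meas: "blkk s c \<in> borel_measurable borel"
proof -
  have "(\<lambda>x. c (blkJ s x)) \<in> borel_measurable borel"
    by (rule measurable_compose[OF blkJ_meas_borel]) simp
  moreover have "blkk s c = (\<lambda>x. if x \<in> {0<..s 0} then c (blkJ s x) else 0)"
    by (auto simp: blkk_def fun_eq_iff)
  ultimately show ?thesis by simp
qed

lemma Tmap_meas_borel: "Tmap s c y \<in> borel_measurable borel"
proof -
  have "(\<lambda>x. (\<lambda>i. y (fst (prod_decode i)) * c i) (blkJ s x)) \<in> borel_measurable borel"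
    by (rule measurable_compose[OF blkJ_meas_borel]) simp
  moreover have "Tmap s c y = (\<lambda>x. if x \<in> {0<..s 0} then (\<lambda>i. y (fst (prod_decode i)) * c i) (blkJ s x) else 0)"
    by (auto simp: Tmap_def fun_eq_iff)
  ultimately show ?thesis by simp
qed

lemma Tmap_meas: "Tmap s c y \<in> borel_measurable lebesgue"
proof -
  have "Tmap s c y \<in> borel_measurable lborel" using Tmap_meas_borel by simp
  thus ?thesis by (rule measurable_completion)
qed

lemma blkk_nonneg: "(\<And>i. 0 \<le> c i) \<Longrightarrow> 0 \<le> blkk s c x"
  by (simp add: blkk_def)

lemma blkJ_anti: assumes "good s" "0 < x" "x \<le> y" "y \<le> s 0" shows "blkJ s y \<le> blkJ s x"
proof -
  have "s (Suc (blkJ s x)) < y" using blkJ_in[OF assms(1,2)] assms by fastforce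
  thus ?thesis unfolding blkJ_def by (rule Least_le)
qed


lemma rearr_upper:
  assumes good: "good s" and cnn: "\<And>i. 0 \<le> c i" and cmono: "\<And>i. c i \<le> c (Suc i)"
    and Om: "\<Omega> \<subseteq> {0<..}" and C: "0 \<le> C" "\<And>x. x\<in>\<Omega> \<Longrightarrow> \<bar>f x\<bar> \<le> C * blkk s c x" and r: "0 < r"
  shows "rearr \<Omega> f r \<le> ennreal (C * blkk s c r)"
proof -
  have knn: "\<And>x. 0 \<le> blkk s c x" using blkk_nonneg cnn by blast
  have sub: "{x\<in>\<Omega>. ennreal (C * blkk s c r) < ennreal \<bar>f x\<bar>} \<subseteq> {0<..<r}"
  proof
    fix x assume x: "x \<in> {x\<in>\<Omega>. ennreal (C * blkk s c r) < ennreal \<bar>f x\<bar>}"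
    hence xO: "x\<in>\<Omega>" and lt: "C * blkk s c r < \<bar>f x\<bar>"
      using C(1) knn by (auto simp: ennreal_less_iff)
    hence "C * blkk s c r < C * blkk s c x" using C(2) by force
    hence lt2: "blkk s c r < blkk s c x" using C(1) by (metis mult_left_mono not_less)
    have "x < r"
    proof (rule ccontr)
      assume "\<not> x < r" hence rx: "r \<le> x" by simp
      show False
      proof (cases "x \<le> s 0")
        case True
        have "blkJ s x \<le> blkJ s r" using blkJ_anti[OF good r rx True] .
        hence "c (blkJ s x) \<le> c (blkJ s r)" using cmono by (meson incseq_SucI incseqD)
        thus False using lt2 True r rx by (simp add: blkk_def)
      next
        case False thus False using lt2 knn[of r] by (simp add: blkk_def)
      qed
    qed
    thus "x \<in> {0<..<r}" using xO Om by auto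
  qed
  have "emeasure lebesgue {x\<in>\<Omega>. ennreal (C * blkk s c r) < ennreal \<bar>f x\<bar>} \<le> emeasure lebesgue {0<..<r}"
    by (rule emeasure_mono[OF sub]) simp
  also have "\<dots> = ennreal r" using r by simp
  finally show ?thesis unfolding rearr_def by (intro Inf_lower) simp
qed

lemma int_upper:
  assumes good: "good s" and cnn: "\<And>i. 0 \<le> c i" and cmono: "\<And>i. c i \<le> c (Suc i)"
    and Om: "\<Omega> \<subseteq> {0<..}" and C: "0 \<le> C" "\<And>x. x\<in>\<Omega> \<Longrightarrow> \<bar>f x\<bar> \<le> C * blkk s c x"
  shows "set_nn_integral lborel {0<..t} (rearr \<Omega> f) \<le> ennreal C * set_nn_integral lborel {0<..t} (\<lambda>x. ennreal (blkk s c x))"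
proof -
  have knn: "\<And>x. 0 \<le> blkk s c x" using blkk_nonneg cnn by blast
  have "set_nn_integral lborel {0<..t} (rearr \<Omega> f) \<le> (\<integral>\<^sup>+x. ennreal C * (ennreal (blkk s c x) * indicator {0<..t} x) \<partial>lborel)"
  proof (rule nn_integral_mono)
    fix x
    show "rearr \<Omega> f x * indicator {0<..t} x \<le> ennreal C * (ennreal (blkk s c x) * indicator {0<..t} x)"
    proof (cases "x \<in> {0<..t}")
      case True
      hence "rearr \<Omega> f x \<le> ennreal (C * blkk s c x)"
        using rearr_upper[OF good cnn cmono Om C] by auto
      thus ?thesis using True C(1) knn by (simp add: ennreal_mult)
    qed simp
  qed
  also have "\<dots> = ennreal C * set_nn_integral lborel {0<..t} (\<lambda>x. ennreal (blkk s c x))"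
    by (rule nn_integral_cmult) (use blkk_meas in measurable)
  finally show ?thesis .
qed

lemma norm_lower:
  assumes good: "good s" and cnn: "\<And>i. 0 \<le> c i"
    and Om: "\<Omega> \<subseteq> {0<..}" and Omd: "\<And>x z. x \<in> \<Omega> \<Longrightarrow> 0 < z \<Longrightarrow> z \<le> x \<Longrightarrow> z \<in> \<Omega>"
    and s0: "s 0 \<in> \<Omega>" and OmS: "\<Omega> \<in> sets lebesgue"
    and phipos: "\<And>t. t \<in> \<Omega> \<Longrightarrow> 0 < \<phi> t"
  shows "ennreal (\<bar>y (fst (prod_decode j))\<bar> * (c j * \<phi> (s j - s (Suc j)))) \<le> marc_norm \<Omega> \<phi> (Tmap s c y)"
proof -
  define n where "n = fst (prod_decode j)"
  define d where "d = s j - s (Suc j)"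
  define v where "v = \<bar>y n\<bar> * c j"
  have sj: "0 < s (Suc j)" "s (Suc j) < s j" "s j \<le> s 0" using good good_dec[OF good, of 0 j] unfolding good_def by auto
  have d0: "0 < d" using sj by (simp add: d_def)
  have dO: "d \<in> \<Omega>" using Omd[OF s0 d0] sj by (simp add: d_def)
  have v0: "0 \<le> v" using cnn by (simp add: v_def)
  define B where "B = {s (Suc j)<..s j}"
  have BO: "B \<subseteq> \<Omega>" using Omd[OF s0] sj by (auto simp: B_def)
  have TB: "\<bar>Tmap s c y x\<bar> = v" if "x \<in> B" for x
  proof -
    have "blkJ s x = j" using blkJ_eq[OF good] that by (auto simp: B_def)
    moreover have "0 < x \<and> x \<le> s 0" using that sj by (auto simp: B_def)
    ultimately show ?thesis using cnn[of j] by (simp add: Tmap_def v_def n_def abs_mult)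
  qed
  have mB: "emeasure lebesgue B = ennreal d" using sj by (simp add: B_def d_def)
  have meas: "{x\<in>\<Omega>. \<sigma> < ennreal \<bar>Tmap s c y x\<bar>} \<in> sets lebesgue" for \<sigma>
  proof -
    have [measurable]: "Tmap s c y \<in> borel_measurable lebesgue" by (rule Tmap_meas)
    have "{x \<in> space lebesgue. \<sigma> < ennreal \<bar>Tmap s c y x\<bar>} \<in> sets lebesgue" by measurable
    hence "\<Omega> \<inter> {x \<in> space lebesgue. \<sigma> < ennreal \<bar>Tmap s c y x\<bar>} \<in> sets lebesgue" using OmS by blast
    moreover have "\<Omega> \<inter> {x \<in> space lebesgue. \<sigma> < ennreal \<bar>Tmap s c y x\<bar>} = {x\<in>\<Omega>. \<sigma> < ennreal \<bar>Tmap s c y x\<bar>}" by auto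
    ultimately show ?thesis by simp
  qed
  have rl: "ennreal v \<le> rearr \<Omega> (Tmap s c y) r" if r: "0 < r" "r < d" for r
    unfolding rearr_def
  proof (rule Inf_greatest)
    fix \<sigma> assume "\<sigma> \<in> {w. emeasure lebesgue {x \<in> \<Omega>. w < ennreal \<bar>Tmap s c y x\<bar>} \<le> ennreal r}"
    hence le: "emeasure lebesgue {x \<in> \<Omega>. \<sigma> < ennreal \<bar>Tmap s c y x\<bar>} \<le> ennreal r" by simp
    show "ennreal v \<le> \<sigma>"
    proof (rule ccontr)
      assume "\<not> ennreal v \<le> \<sigma>" hence lt: "\<sigma> < ennreal v" by simp
      have "B \<subseteq> {x \<in> \<Omega>. \<sigma> < ennreal \<bar>Tmap s c y x\<bar>}" using BO TB lt by auto
      hence "emeasure lebesgue B \<le> emeasure lebesgue {x \<in> \<Omega>. \<sigma> < ennreal \<bar>Tmap s c y x\<bar>}"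
        by (rule emeasure_mono) (rule meas)
      hence "ennreal d \<le> ennreal r" using le mB by simp
      thus False using r by simp
    qed
  qed
  have "ennreal v * ennreal d = (\<integral>\<^sup>+x. ennreal v * indicator {0<..<d} x \<partial>lborel)"
    using d0 by (simp add: nn_integral_cmult_indicator)
  also have "\<dots> \<le> set_nn_integral lborel {0<..d} (rearr \<Omega> (Tmap s c y))"
  proof (rule nn_integral_mono)
    fix x show "ennreal v * indicator {0<..<d} x \<le> rearr \<Omega> (Tmap s c y) x * indicator {0<..d} x"
      using rl[of x] by (cases "x \<in> {0<..<d}") (auto simp: indicator_def)
  qed
  finally have I: "ennreal v * ennreal d \<le> set_nn_integral lborel {0<..d} (rearr \<Omega> (Tmap s c y))" .
  have "ennreal (\<phi> d / d) * (ennreal v * ennreal d) \<le> ennreal (\<phi> d / d) * set_nn_integral lborel {0<..d} (rearr \<Omega> (Tmap s c y))"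
    by (rule mult_left_mono[OF I]) simp
  also have "\<dots> \<le> marc_norm \<Omega> \<phi> (Tmap s c y)"
    unfolding marc_norm_def using dO by (rule SUP_upper2) simp
  also have "ennreal (\<phi> d / d) * (ennreal v * ennreal d) = ennreal (\<phi> d / d * (v * d))"
    using phipos[OF dO] d0 v0 by (simp add: ennreal_mult[symmetric] del: ennreal_mult_divide_eq)
  also have "\<phi> d / d * (v * d) = \<bar>y (fst (prod_decode j))\<bar> * (c j * \<phi> (s j - s (Suc j)))"
    using d0 by (simp add: v_def n_def d_def field_simps)
  finally show ?thesis .
qed

lemma max_mult_nonneg: "0 \<le> (k::real) \<Longrightarrow> max a b * k = max (a*k) (b*k)"
proof (cases "a \<le> b")
  case True assume k: "0 \<le> k"
  hence "a*k \<le> b*k" using True by (intro mult_right_mono) auto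
  thus ?thesis using True by (simp add: max_def)
next
  case False assume k: "0 \<le> k"
  hence "b*k \<le> a*k" using False by (intro mult_right_mono) auto
  thus ?thesis using False by (auto simp: max_def)
qed

lemma Om_facts:
  fixes \<Omega> :: "real set"
  assumes "\<Omega> = {0<..<1} \<or> \<Omega> = {0<..}"
  shows "\<Omega> \<subseteq> {0<..}" "\<And>x z. x \<in> \<Omega> \<Longrightarrow> 0 < z \<Longrightarrow> z \<le> x \<Longrightarrow> z \<in> \<Omega>"
    "\<Omega> \<in> sets lebesgue"
proof -
  show "\<Omega> \<subseteq> {0<..}" using assms by auto
  show "\<And>x z. x \<in> \<Omega> \<Longrightarrow> 0 < z \<Longrightarrow> z \<le> x \<Longrightarrow> z \<in> \<Omega>"
  proof -
    fix x z :: real assume "x \<in> \<Omega>" "0 < z" "z \<le> x"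
    thus "z \<in> \<Omega>" using assms by (cases "\<Omega> = {0<..<1}") auto
  qed
  have "{0::real<..<1} \<in> sets lborel" "{0::real<..} \<in> sets lborel" by simp_all
  hence "{0::real<..<1} \<in> sets lebesgue" "{0::real<..} \<in> sets lebesgue" by (auto intro: sets_completionI_sets)
  thus "\<Omega> \<in> sets lebesgue" using assms by auto
qed

theorem general_embed:
  assumes Omeq: "\<Omega> = {0<..<1} \<or> \<Omega> = {0<..}" and qc: "quasi_concave_on \<Omega> \<phi>"
    and good: "good s" and s0: "s 0 \<in> \<Omega>"
    and cnn: "\<And>i. 0 \<le> c i" and cmono: "\<And>i. c i \<le> c (Suc i)"
    and ibd: "\<And>t. t \<in> \<Omega> \<Longrightarrow> set_nn_integral lborel {0<..t} (\<lambda>x. ennreal (blkk s c x)) \<le> ennreal (t / \<phi> t)"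
    and low: "\<And>\<epsilon>. 0 < \<epsilon> \<Longrightarrow> \<exists>J. \<forall>j\<ge>J. 1 - \<epsilon> \<le> c j * \<phi> (s j - s (Suc j))"
  shows "\<exists>T. lattice_isometric_embedding \<Omega> \<phi> T"
proof -
  note Om = Om_facts[OF Omeq]
  have phipos: "\<And>t. t \<in> \<Omega> \<Longrightarrow> 0 < \<phi> t" using qc by (auto simp: quasi_concave_on_def)
  have norm_eq: "marc_norm \<Omega> \<phi> (Tmap s c y) = ennreal (linf_norm y)" if y: "y \<in> linf" for y
  proof -
    define C where "C = linf_norm y"
    have bdd: "bdd_above (range (\<lambda>n. \<bar>y n\<bar>))"
    proof -
      obtain M where "\<And>n. norm (y n) \<le> M" using y unfolding linf_def bounded_iff by auto
      thus ?thesis by (intro bdd_aboveI[of _ M]) auto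
    qed
    have yC: "\<bar>y n\<bar> \<le> C" for n unfolding C_def linf_norm_def by (rule cSUP_upper[OF _ bdd]) simp
    have C0: "0 \<le> C" using yC[of 0] by simp
    have TC: "\<bar>Tmap s c y x\<bar> \<le> C * blkk s c x" for x
      using yC cnn by (auto simp: Tmap_def blkk_def abs_mult intro: mult_right_mono)
    have upper: "marc_norm \<Omega> \<phi> (Tmap s c y) \<le> ennreal C"
      unfolding marc_norm_def
    proof (rule SUP_least)
      fix t assume t: "t \<in> \<Omega>"
      have t0: "0 < t" using t Om(1) by auto
      have "ennreal (\<phi> t / t) * set_nn_integral lborel {0<..t} (rearr \<Omega> (Tmap s c y))
          \<le> ennreal (\<phi> t / t) * (ennreal C * set_nn_integral lborel {0<..t} (\<lambda>x. ennreal (blkk s c x)))"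
        by (rule mult_left_mono[OF int_upper[OF good cnn cmono Om(1) C0 TC]]) simp
      also have "\<dots> \<le> ennreal (\<phi> t / t) * (ennreal C * ennreal (t / \<phi> t))"
        by (intro mult_left_mono ibd[OF t]) simp_all
      also have "\<dots> = ennreal (\<phi> t / t * (C * (t / \<phi> t)))"
        using phipos[OF t] t0 C0 by (simp add: ennreal_mult[symmetric] del: ennreal_mult_divide_eq)
      also have "\<phi> t / t * (C * (t / \<phi> t)) = C" using phipos[OF t] t0 by (simp add: field_simps)
      finally show "ennreal (\<phi> t / t) * set_nn_integral lborel {0<..t} (rearr \<Omega> (Tmap s c y)) \<le> ennreal C" .
    qed
    obtain r where r: "marc_norm \<Omega> \<phi> (Tmap s c y) = ennreal r" "0 \<le> r"
      using upper by (cases "marc_norm \<Omega> \<phi> (Tmap s c y)") (auto simp: top_unique)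
    have rC: "r \<le> C" using upper r C0 by simp
    have lowe: "\<bar>y n\<bar> * (1 - \<epsilon>) \<le> r" if e: "0 < \<epsilon>" for n \<epsilon>
    proof -
      obtain J where J: "\<And>j. j \<ge> J \<Longrightarrow> 1 - \<epsilon> \<le> c j * \<phi> (s j - s (Suc j))" using low[OF e] by blast
      define j where "j = prod_encode (n, J)"
      have jJ: "J \<le> j" unfolding j_def by (rule le_prod_encode_2)
      have nj: "fst (prod_decode j) = n" by (simp add: j_def)
      have "ennreal (\<bar>y (fst (prod_decode j))\<bar> * (c j * \<phi> (s j - s (Suc j)))) \<le> marc_norm \<Omega> \<phi> (Tmap s c y)"
        by (rule norm_lower) (use good cnn Om s0 phipos in blast)+
      hence "ennreal (\<bar>y n\<bar> * (c j * \<phi> (s j - s (Suc j)))) \<le> ennreal r"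
        using nj r(1) by simp
      hence "\<bar>y n\<bar> * (c j * \<phi> (s j - s (Suc j))) \<le> r" using r(2) by (simp add: ennreal_le_iff)
      moreover have "\<bar>y n\<bar> * (1 - \<epsilon>) \<le> \<bar>y n\<bar> * (c j * \<phi> (s j - s (Suc j)))"
        using J[OF jJ] by (intro mult_left_mono) auto
      ultimately show ?thesis by linarith
    qed
    have yr: "\<bar>y n\<bar> \<le> r" for n
    proof (rule ccontr)
      assume "\<not> \<bar>y n\<bar> \<le> r"
      hence lt: "r < \<bar>y n\<bar>" by simp
      define e where "e = (\<bar>y n\<bar> - r) / (2 * \<bar>y n\<bar>)"
      have e0: "0 < e" using lt r(2) by (simp add: e_def)
      have "\<bar>y n\<bar> * (1 - e) = (\<bar>y n\<bar> + r) / 2" using lt r(2) by (simp add: e_def field_simps)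
      thus False using lowe[OF e0, of n] lt by simp
    qed
    have "C \<le> r" unfolding C_def linf_norm_def by (rule cSUP_least) (auto intro: yr)
    with rC r show ?thesis by (simp add: C_def)
  qed
  have "lattice_isometric_embedding \<Omega> \<phi> (Tmap s c)"
    unfolding lattice_isometric_embedding_def
  proof (intro conjI ballI allI)
    fix y assume y: "y \<in> linf"
    show "marc_norm \<Omega> \<phi> (Tmap s c y) = ennreal (linf_norm y)" using norm_eq[OF y] .
    have "(\<lambda>x. indicator \<Omega> x *\<^sub>R Tmap s c y x) \<in> borel_measurable lebesgue"
      using Tmap_meas[of s c y] Om(3) by measurable
    thus "Tmap s c y \<in> marc_space \<Omega> \<phi>"
      unfolding marc_space_def using norm_eq[OF y] by (simp add: set_borel_measurable_def)
  next
    fix x y a b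
    show "AE w in lebesgue. w \<in> \<Omega> \<longrightarrow> Tmap s c (\<lambda>n. a * x n + b * y n) w = a * Tmap s c x w + b * Tmap s c y w"
      by (intro AE_I2) (simp add: Tmap_def algebra_simps)
  next
    fix x y
    show "AE w in lebesgue. w \<in> \<Omega> \<longrightarrow> Tmap s c (\<lambda>n. max (x n) (y n)) w = max (Tmap s c x w) (Tmap s c y w)"
      using cnn by (intro AE_I2) (auto simp: Tmap_def max_mult_nonneg)
  qed
  thus ?thesis by blast
qed


lemma qc_facts:
  fixes \<Omega> :: "real set"
  assumes Omeq: "\<Omega> = {0<..<1} \<or> \<Omega> = {0<..}" and qc: "quasi_concave_on \<Omega> \<phi>"
    and x: "x \<in> \<Omega>" and y: "y \<in> \<Omega>" and xy: "x \<le> y"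
  shows "\<phi> x \<le> \<phi> y" "\<phi> y / y \<le> \<phi> x / x" "x / \<phi> x \<le> y / \<phi> y" "0 < \<phi> x" "0 < x"
proof -
  show 1: "\<phi> x \<le> \<phi> y" using qc x y xy by (auto simp: quasi_concave_on_def mono_on_def)
  show 2: "\<phi> y / y \<le> \<phi> x / x" using qc x y xy by (auto simp: quasi_concave_on_def)
  show px: "0 < \<phi> x" using qc x by (auto simp: quasi_concave_on_def)
  have py: "0 < \<phi> y" using qc y by (auto simp: quasi_concave_on_def)
  show x0: "0 < x" using Om_facts(1)[OF Omeq] x by auto
  have y0: "0 < y" using Om_facts(1)[OF Omeq] y by auto
  from 2 have "\<phi> y * x \<le> \<phi> x * y" using x0 y0 by (simp add: field_simps)
  thus "x / \<phi> x \<le> y / \<phi> y" using px py by (simp add: field_simps mult.commute)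
qed

lemma caseB:
  fixes \<Omega> :: "real set"
  assumes Omeq: "\<Omega> = {0<..<1} \<or> \<Omega> = {0<..}" and qc: "quasi_concave_on \<Omega> \<phi>"
    and a0: "0 < a" and alow: "\<And>t. t\<in>\<Omega> \<Longrightarrow> a \<le> \<phi> t" and ainf: "\<And>e. 0 < e \<Longrightarrow> \<exists>t\<in>\<Omega>. \<phi> t < a + e"
  shows "\<exists>T. lattice_isometric_embedding \<Omega> \<phi> T"
proof -
  note Om = Om_facts[OF Omeq]
  note Q = qc_facts[OF Omeq qc]
  obtain t0 where t0: "t0 \<in> \<Omega>" "\<phi> t0 < 2 * a" using ainf[OF a0] by auto
  have t00: "0 < t0" using t0 Om(1) by auto
  define \<delta> where "\<delta> = t0 / 2"
  define s where "s j = \<delta> * (1/2)^j" for j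
  define c where "c j = 2 / \<phi> (2 * s j) - 1 / a" for j
  have d0: "0 < \<delta>" using t00 by (simp add: \<delta>_def)
  have s0: "0 < s j" for j using d0 by (simp add: s_def)
  have sSuc: "s (Suc j) = s j / 2" for j by (simp add: s_def)
  have sle: "s j \<le> \<delta>" for j using d0 by (simp add: s_def mult_left_le power_le_one)
  have good: "good s"
  proof -
    have "s \<longlonglongrightarrow> \<delta> * 0" unfolding s_def by (intro tendsto_mult tendsto_const LIMSEQ_power_zero) simp
    moreover have "s (Suc j) < s j" for j using s0[of j] sSuc[of j] by simp
    ultimately show ?thesis using s0 unfolding good_def by auto
  qed
  have sO: "s j \<in> \<Omega>" for j using Om(2)[OF t0(1) s0, of j] sle[of j] d0 by (simp add: \<delta>_def)
  have s2O: "2 * s j \<in> \<Omega>" for j using Om(2)[OF t0(1)] s0[of j] sle[of j] by (simp add: \<delta>_def)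
  have s2le: "\<phi> (2 * s j) < 2 * a" for j
    using Q(1)[OF s2O t0(1), of j] sle[of j] t0(2) by (simp add: \<delta>_def)
  have phipos: "\<And>t. t \<in> \<Omega> \<Longrightarrow> 0 < \<phi> t" using alow a0 by (meson less_le_trans)
  have cnn: "0 \<le> c j" for j
  proof -
    have "1 / a \<le> 2 / \<phi> (2 * s j)" using s2le[of j] phipos[OF s2O] a0 by (simp add: field_simps)
    thus ?thesis by (simp add: c_def)
  qed
  have cL: "c j \<le> 1 / a" for j
  proof -
    have "2 / \<phi> (2 * s j) \<le> 2 / a" using alow[OF s2O] a0 by (simp add: frac_le)
    thus ?thesis by (simp add: c_def)
  qed
  have cmono: "c j \<le> c (Suc j)" for j
  proof -
    have "2 * s (Suc j) \<le> 2 * s j" using sSuc[of j] s0[of j] by simp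
    hence "\<phi> (2 * s (Suc j)) \<le> \<phi> (2 * s j)" using Q(1) s2O by blast
    hence "2 / \<phi> (2 * s j) \<le> 2 / \<phi> (2 * s (Suc j))" using phipos[OF s2O] by (simp add: frac_le)
    thus ?thesis by (simp add: c_def)
  qed
  have cSuc: "c (Suc j) = 2 / \<phi> (s j) - 1 / a" for j by (simp add: c_def sSuc)
  have cu: "c j \<le> 1 / \<phi> (s j)" for j
  proof -
    have "s j \<le> 2 * s j" using s0[of j] by simp
    hence "\<phi> (s j) \<le> \<phi> (2 * s j)" using Q(1) sO s2O by blast
    hence "2 / \<phi> (2 * s j) \<le> 2 / \<phi> (s j)" using phipos[OF sO] by (simp add: frac_le)
    moreover have "1 / \<phi> (s j) \<le> 1 / a" using alow[OF sO] a0 by (simp add: frac_le)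
    ultimately show ?thesis by (simp add: c_def)
  qed
  show ?thesis
  proof (rule general_embed[where c=c and s=s, OF Omeq qc good sO[of 0] cnn cmono])
    fix t assume tO: "t \<in> \<Omega>"
    have t0': "0 < t" using tO Om(1) by auto
    obtain j where j: "s (Suc j) < t" "j = 0 \<or> t \<le> s j"
    proof (cases "t \<le> s 0")
      case True
      from blkJ_in[OF good t0' True] show ?thesis by (intro that[of "blkJ s t"]) auto
    next
      case False
      hence "s (Suc 0) < t" using good unfolding good_def by (meson less_trans not_le)
      thus ?thesis by (intro that[of 0]) auto
    qed
    define m where "m = min t (s j)"
    have m: "s (Suc j) < m" "m \<le> s j" "m \<le> t" using j s0 good unfolding good_def m_def by auto
    have mO: "m \<in> \<Omega>" using Om(2)[OF tO] m s0[of "Suc j"] by auto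
    have s12: "s (Suc (Suc j)) < s (Suc j)" using s0[of "Suc (Suc j)"] sSuc[of "Suc j"] by simp
    define R where "R x = ennreal (1/a) * indicator {0<..s (Suc (Suc j))} x
       + ennreal (c (Suc j)) * indicator {s (Suc (Suc j))<..s (Suc j)} x
       + ennreal (c j) * indicator {s (Suc j)<..m} x" for x
    have pw: "ennreal (blkk s c x) * indicator {0<..t} x \<le> R x" for x
    proof (cases "0 < x \<and> x \<le> t")
      case False
      hence "indicator {0<..t} x = (0::ennreal)" by (auto simp: indicator_def)
      thus ?thesis by simp
    next
      case True
      hence x0: "0 < x" and xt: "x \<le> t" by auto
      show ?thesis
      proof (cases "x \<le> s (Suc (Suc j))")
        case True
        have "blkk s c x \<le> 1/a" using cL a0 by (simp add: blkk_def)
        moreover have "R x = ennreal (1/a)" using True x0 s12 m by (simp add: R_def indicator_def)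
        ultimately show ?thesis using x0 xt by (simp add: ennreal_leI)
      next
        case F1: False
        show ?thesis
        proof (cases "x \<le> s (Suc j)")
          case True
          have "blkJ s x = Suc j" using blkJ_eq[OF good] F1 True by simp
          moreover have "x \<le> s 0" using True good_dec[OF good, of 0 "Suc j"] by simp
          ultimately show ?thesis using True F1 x0 xt s12 m by (simp add: R_def blkk_def indicator_def)
        next
          case F2: False
          show ?thesis
          proof (cases "x \<le> m")
            case True
            have "blkJ s x = j" using blkJ_eq[OF good] F2 True m by simp
            moreover have "x \<le> s 0" using True m good_dec[OF good, of 0 j] by simp
            ultimately show ?thesis using True F1 F2 x0 xt m by (simp add: R_def blkk_def indicator_def)
          next
            case False
            hence "j = 0" "s 0 < x" using j xt m_def by auto
            thus ?thesis by (simp add: blkk_def)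
          qed
        qed
      qed
    qed
    have "set_nn_integral lborel {0<..t} (\<lambda>x. ennreal (blkk s c x)) \<le> integral\<^sup>N lborel R"
      by (rule nn_integral_mono) (rule pw)
    also have "integral\<^sup>N lborel R = ennreal (1/a) * ennreal (s (Suc (Suc j)))
        + ennreal (c (Suc j)) * ennreal (s (Suc j) - s (Suc (Suc j)))
        + ennreal (c j) * ennreal (m - s (Suc j))"
      unfolding R_def using s0[of "Suc (Suc j)"] s12 m
      by (simp add: nn_integral_add nn_integral_cmult_indicator)
    also have "\<dots> = ennreal (1/a * s (Suc (Suc j)) + c (Suc j) * (s (Suc j) - s (Suc (Suc j)))
        + c j * (m - s (Suc j)))"
      using a0 cnn[of j] cnn[of "Suc j"] s12 m s0[of "Suc (Suc j)"]
      by (simp add: ennreal_mult[symmetric] ennreal_plus[symmetric] del: ennreal_plus)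
    also have "\<dots> \<le> ennreal (t / \<phi> t)"
    proof (rule ennreal_leI)
      have e1: "s (Suc j) - s (Suc (Suc j)) = s (Suc (Suc j))" "s (Suc j) = 2 * s (Suc (Suc j))"
        using sSuc[of "Suc j"] by simp_all
      have "c j * (m - s (Suc j)) \<le> (1 / \<phi> (s j)) * (m - s (Suc j))"
        using cu[of j] m by (intro mult_right_mono) auto
      hence "1/a * s (Suc (Suc j)) + c (Suc j) * (s (Suc j) - s (Suc (Suc j))) + c j * (m - s (Suc j))
          \<le> 1/a * s (Suc (Suc j)) + (2 / \<phi> (s j) - 1 / a) * s (Suc (Suc j)) + (1 / \<phi> (s j)) * (m - s (Suc j))"
        by (simp add: e1(1) cSuc)
      also have "\<dots> = m / \<phi> (s j)" by (simp add: e1(2) field_simps add_divide_distrib[symmetric])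
      also have "\<dots> \<le> m / \<phi> m"
        using Q(1)[OF mO sO[of j] m(2)] phipos[OF mO] m s0[of "Suc j"] by (intro divide_left_mono) auto
      also have "\<dots> \<le> t / \<phi> t" using Q(3)[OF mO tO m(3)] .
      finally show "1/a * s (Suc (Suc j)) + c (Suc j) * (s (Suc j) - s (Suc (Suc j))) + c j * (m - s (Suc j)) \<le> t / \<phi> t" .
    qed
    finally show "set_nn_integral lborel {0<..t} (\<lambda>x. ennreal (blkk s c x)) \<le> ennreal (t / \<phi> t)" .
  next
    fix \<epsilon> :: real assume e: "0 < \<epsilon>"
    show "\<exists>J. \<forall>j\<ge>J. 1 - \<epsilon> \<le> c j * \<phi> (s j - s (Suc j))"
    proof (cases "\<epsilon> < 2")
      case False
      have "0 \<le> c j * \<phi> (s j - s (Suc j))" for j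
      proof -
        have "s j - s (Suc j) = s (Suc j)" using sSuc[of j] by simp
        hence "0 < \<phi> (s j - s (Suc j))" using phipos[OF sO[of "Suc j"]] by simp
        thus ?thesis using cnn[of j] by simp
      qed
      thus ?thesis using False by (intro exI[of _ 0]) (smt (verit))
    next
      case True
      define b where "b = 2 * a / (2 - \<epsilon>)"
      have ba: "a < b" using True e a0 by (simp add: b_def field_simps)
      obtain t1 where t1: "t1 \<in> \<Omega>" "\<phi> t1 < b" using ainf[of "b - a"] ba by auto
      have t10: "0 < t1" using t1 Om(1) by auto
      have "eventually (\<lambda>j. 2 * s j < t1) sequentially"
      proof -
        have "(\<lambda>j. 2 * s j) \<longlonglongrightarrow> 2 * 0" using good unfolding good_def by (intro tendsto_mult tendsto_const) auto
        hence "(\<lambda>j. 2 * s j) \<longlonglongrightarrow> 0" by simp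
        from order_tendstoD(2)[OF this t10] show ?thesis .
      qed
      then obtain J where J: "\<And>j. j \<ge> J \<Longrightarrow> 2 * s j < t1" by (auto simp: eventually_sequentially)
      show ?thesis
      proof (intro exI[of _ J] allI impI)
        fix j assume "J \<le> j"
        hence "2 * s j < t1" by (rule J)
        hence p1: "\<phi> (2 * s j) < b" using Q(1)[OF s2O t1(1), of j] t1(2) by simp
        have "s j - s (Suc j) = s (Suc j)" using sSuc[of j] by simp
        hence dO: "s j - s (Suc j) \<in> \<Omega>" using sO[of "Suc j"] by simp
        have "1 - \<epsilon> \<le> c j * a"
        proof -
          have "2 / b \<le> 2 / \<phi> (2 * s j)" using p1 phipos[OF s2O, of j] by (intro divide_left_mono) auto
          hence "2 / b * a \<le> 2 / \<phi> (2 * s j) * a" using a0 by (intro mult_right_mono) auto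
          moreover have "2 / b * a = 2 - \<epsilon>" using a0 True by (simp add: b_def field_simps)
          ultimately have "2 - \<epsilon> \<le> 2 / \<phi> (2 * s j) * a" by simp
          thus ?thesis using a0 by (simp add: c_def algebra_simps)
        qed
        also have "c j * a \<le> c j * \<phi> (s j - s (Suc j))" using alow[OF dO] cnn[of j] by (intro mult_left_mono) auto
        finally show "1 - \<epsilon> \<le> c j * \<phi> (s j - s (Suc j))" .
      qed
    qed
  qed
qed


lemma int_series:
  assumes good: "good s" and cnn: "\<And>i. 0 \<le> c i"
  shows "set_nn_integral lborel {0<..t} (\<lambda>x. ennreal (blkk s c x))
     \<le> (\<Sum>i. ennreal (c i) * emeasure lborel ({s (Suc i)<..s i} \<inter> {0<..t}))"
proof -
  have pw: "ennreal (blkk s c x) * indicator {0<..t} x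
      \<le> (\<Sum>i. ennreal (c i) * indicator ({s (Suc i)<..s i} \<inter> {0<..t}) x)" for x
  proof (cases "0 < x \<and> x \<le> t \<and> x \<le> s 0")
    case False
    hence "ennreal (blkk s c x) * indicator {0<..t} x = 0" by (auto simp: blkk_def indicator_def)
    thus ?thesis by (metis zero_le)
  next
    case True
    define J where "J = blkJ s x"
    have J: "s (Suc J) < x" "x \<le> s J" using blkJ_in[OF good] True unfolding J_def by auto
    define F where "F i = ennreal (c i) * indicator ({s (Suc i)<..s i} \<inter> {0<..t}) x" for i
    have "ennreal (blkk s c x) * indicator {0<..t} x = F J"
      using True J by (simp add: blkk_def J_def indicator_def F_def)
    also have "F J \<le> suminf F" using sum_le_suminf[of F "{J}"] by simp
    also have "suminf F = (\<Sum>i. ennreal (c i) * indicator ({s (Suc i)<..s i} \<inter> {0<..t}) x)"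
      unfolding F_def ..
    finally show ?thesis .
  qed
  have "set_nn_integral lborel {0<..t} (\<lambda>x. ennreal (blkk s c x))
      \<le> (\<integral>\<^sup>+x. (\<Sum>i. ennreal (c i) * indicator ({s (Suc i)<..s i} \<inter> {0<..t}) x) \<partial>lborel)"
    by (rule nn_integral_mono) (rule pw)
  also have "\<dots> = (\<Sum>i. \<integral>\<^sup>+x. ennreal (c i) * indicator ({s (Suc i)<..s i} \<inter> {0<..t}) x \<partial>lborel)"
    by (rule nn_integral_suminf) simp
  also have "\<dots> = (\<Sum>i. ennreal (c i) * emeasure lborel ({s (Suc i)<..s i} \<inter> {0<..t}))"
    by (simp add: nn_integral_cmult_indicator)
  finally show ?thesis .
qed

lemma caseA:
  fixes \<Omega> :: "real set"
  assumes Omeq: "\<Omega> = {0<..<1} \<or> \<Omega> = {0<..}" and qc: "quasi_concave_on \<Omega> \<phi>"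
    and phi0: "\<And>e. 0 < e \<Longrightarrow> \<exists>t\<in>\<Omega>. \<phi> t < e"
    and psi0: "((\<lambda>t. t / \<phi> t) \<longlongrightarrow> 0) (at_right 0)"
  shows "\<exists>T. lattice_isometric_embedding \<Omega> \<phi> T"
proof -
  note Om = Om_facts[OF Omeq]
  note Q = qc_facts[OF Omeq qc]
  have phipos: "\<And>t. t \<in> \<Omega> \<Longrightarrow> 0 < \<phi> t" using qc by (auto simp: quasi_concave_on_def)
  define \<eta> where "\<eta> k = (1/2::real)^(Suc k)" for k
  have eta: "0 < \<eta> k" "\<eta> k \<le> 1/2" "\<eta> (Suc k) \<le> \<eta> k" for k
    by (auto simp: \<eta>_def power_le_one)
  have E1: "\<exists>\<beta>. 0 < \<beta> \<and> \<beta> \<le> x \<and> \<phi> \<beta> \<le> e" if x: "x \<in> \<Omega>" and e: "0 < e" for x e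
  proof -
    obtain t where t: "t \<in> \<Omega>" "\<phi> t < e" using phi0[OF e] by auto
    have "0 < min t x" using t x Om(1) by auto
    moreover have "min t x \<in> \<Omega>" using Om(2)[OF x \<open>0 < min t x\<close>] by simp
    ultimately have "\<phi> (min t x) \<le> \<phi> t" using Q(1)[of "min t x" t] t by simp
    thus ?thesis using t \<open>0 < min t x\<close> by (intro exI[of _ "min t x"]) auto
  qed
  have E2: "\<exists>\<sigma>. 0 < \<sigma> \<and> \<sigma> \<le> x \<and> \<sigma> / \<phi> \<sigma> \<le> e" if x: "0 < x" and e: "0 < e" for x e
  proof -
    have "eventually (\<lambda>t. t / \<phi> t < e) (at_right 0)" using order_tendstoD(2)[OF psi0 e] .
    then obtain b where b: "0 < b" "\<And>y. 0 < y \<Longrightarrow> y < b \<Longrightarrow> y / \<phi> y < e"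
      unfolding eventually_at_right_field by auto
    define \<sigma> where "\<sigma> = min x (b/2)"
    have "0 < \<sigma>" "\<sigma> < b" using x b by (auto simp: \<sigma>_def)
    thus ?thesis using b(2)[of \<sigma>] by (intro exI[of _ \<sigma>]) (auto simp: \<sigma>_def)
  qed
  define bet where "bet k x = (SOME \<beta>. 0 < \<beta> \<and> \<beta> \<le> x \<and> \<phi> \<beta> \<le> \<eta> (Suc k) * \<phi> (x/2) / 2)" for k x
  define nxt where "nxt k x = (SOME \<sigma>. 0 < \<sigma> \<and> \<sigma> \<le> bet k x / 2 \<and>
      \<sigma> / \<phi> \<sigma> \<le> \<eta> k * (bet k x / \<phi> (bet k x)) / 2 / 2^(k+2))" for k x
  define s where "s = rec_nat (1/2) nxt"
  have s_0: "s 0 = 1/2" and s_Suc: "\<And>k. s (Suc k) = nxt k (s k)" by (simp_all add: s_def)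
  have betP: "0 < bet k x \<and> bet k x \<le> x \<and> \<phi> (bet k x) \<le> \<eta> (Suc k) * \<phi> (x/2) / 2" if x: "x \<in> \<Omega>" for k x
  proof -
    have "x/2 \<in> \<Omega>" using Om(2)[OF x] x Om(1) by auto
    hence "0 < \<eta> (Suc k) * \<phi> (x/2) / 2" using phipos eta by simp
    from E1[OF x this] show ?thesis unfolding bet_def by (rule someI_ex)
  qed
  have nxtP: "0 < nxt k x \<and> nxt k x \<le> bet k x / 2 \<and>
      nxt k x / \<phi> (nxt k x) \<le> \<eta> k * (bet k x / \<phi> (bet k x)) / 2 / 2^(k+2)" if x: "x \<in> \<Omega>" for k x
  proof -
    have bO: "bet k x \<in> \<Omega>" using Om(2)[OF x] betP[OF x] by auto
    hence "0 < \<eta> k * (bet k x / \<phi> (bet k x)) / 2 / 2^(k+2)" using phipos eta betP[OF x] by simp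
    moreover have "0 < bet k x / 2" using betP[OF x] by simp
    ultimately have "\<exists>\<sigma>. 0 < \<sigma> \<and> \<sigma> \<le> bet k x / 2 \<and> \<sigma> / \<phi> \<sigma> \<le> \<eta> k * (bet k x / \<phi> (bet k x)) / 2 / 2^(k+2)"
      using E2 by blast
    thus ?thesis unfolding nxt_def by (rule someI_ex)
  qed
  have half: "1/2 \<in> \<Omega>" using Omeq by auto
  have sO: "s k \<in> \<Omega> \<and> s k \<le> (1/2) * (1/2)^k" for k
  proof (induction k)
    case 0 show ?case unfolding s_0 using half by simp
  next
    case (Suc k)
    hence sk: "s k \<in> \<Omega>" by simp
    have "0 < s (Suc k)" "s (Suc k) \<le> s k / 2" using nxtP[OF sk, of k] betP[OF sk, of k] s_Suc[of k] by auto
    thus ?case using Om(2)[OF sk] Suc by auto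
  qed
  define b where "b k = bet k (s k)" for k
  define Qk where "Qk k = \<eta> k * (b k / \<phi> (b k)) / 2" for k
  have F1: "0 < b k" "b k \<le> s k" "\<phi> (b k) \<le> \<eta> (Suc k) * \<phi> (s k / 2) / 2" for k
    using betP[of "s k" k] sO[of k] unfolding b_def by auto
  have F2: "0 < s (Suc k)" "s (Suc k) \<le> b k / 2" "s (Suc k) / \<phi> (s (Suc k)) \<le> Qk k / 2^(k+2)" for k
    using nxtP[of "s k" k] sO[of k] s_Suc[of k] unfolding b_def Qk_def by auto
  have spos: "0 < s k" for k using sO[of k] Om(1) by auto
  have bO: "b k \<in> \<Omega>" for k using Om(2)[OF conjunct1[OF sO[of k]] F1(1)] F1(2) by simp
  have sdec: "s (Suc k) < s k" for k using F1[of k] F2[of k] by simp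
  have good: "good s"
  proof -
    have "s \<longlonglongrightarrow> 0"
    proof (rule tendsto_sandwich[of "\<lambda>_. 0" _ _ "\<lambda>k. (1/2) * (1/2)^k"])
      show "\<forall>\<^sub>F n in sequentially. 0 \<le> s n" using spos by (simp add: less_imp_le)
      show "\<forall>\<^sub>F n in sequentially. s n \<le> 1 / 2 * (1 / 2) ^ n" using sO by auto
      show "(\<lambda>k. (1/2) * (1/2::real)^k) \<longlonglongrightarrow> 0"
        by (intro tendsto_mult_left_zero tendsto_mult_right_zero LIMSEQ_power_zero) simp
    qed simp
    thus ?thesis using spos sdec unfolding good_def by auto
  qed
  define d where "d k = s k - s (Suc k)" for k
  define c where "c k = (1 - \<eta> k) / \<phi> (d k)" for k
  have dge: "s k / 2 \<le> d k" for k using F2(2)[of k] F1(2)[of k] by (simp add: d_def)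
  have dpos: "0 < d k" for k using sdec[of k] by (simp add: d_def)
  have dO: "d k \<in> \<Omega>" for k using Om(2)[OF conjunct1[OF sO[of k]] dpos] spos[of "Suc k"] by (simp add: d_def)
  have s2O: "s k / 2 \<in> \<Omega>" for k using Om(2)[OF conjunct1[OF sO[of k]]] spos[of k] by simp
  have dmono: "d (Suc k) \<le> d k" for k using dge[of k] F2(2)[of k] F1(2)[of k] spos[of "Suc (Suc k)"] by (simp add: d_def)
  have cnn: "0 \<le> c k" for k using eta[of k] phipos[OF dO, of k] unfolding c_def by (intro divide_nonneg_pos) auto
  have cmono: "c k \<le> c (Suc k)" for k
  proof -
    have "\<phi> (d (Suc k)) \<le> \<phi> (d k)" using Q(1)[OF dO dO dmono] .
    thus ?thesis unfolding c_def using eta[of k] eta[of "Suc k"] phipos[OF dO]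
      by (intro frac_le) auto
  qed
  have cd: "c k * d k = (1 - \<eta> k) * (d k / \<phi> (d k))" for k by (simp add: c_def)
  have Q0: "0 \<le> Qk k" for k using eta[of k] F1[of k] phipos[OF bO, of k] unfolding Qk_def
    by (intro divide_nonneg_pos mult_nonneg_nonneg) auto
  have Qdec: "Qk (Suc k) \<le> Qk k" for k
  proof -
    have P0: "0 \<le> b (Suc k) / \<phi> (b (Suc k))"
      using F1(1)[of "Suc k"] phipos[OF bO, of "Suc k"] by (intro divide_nonneg_pos) auto
    have "\<eta> (Suc k) * (b (Suc k) / \<phi> (b (Suc k))) \<le> 1 * (b (Suc k) / \<phi> (b (Suc k)))"
      using eta[of "Suc k"] P0 by (intro mult_right_mono) auto
    moreover have "Qk (Suc k) = (\<eta> (Suc k) * (b (Suc k) / \<phi> (b (Suc k)))) / 2" by (simp add: Qk_def)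
    moreover have gen: "\<And>X P::real. X \<le> 1*P \<Longrightarrow> 0 \<le> P \<Longrightarrow> X/2 \<le> P" by linarith
    ultimately have "Qk (Suc k) \<le> b (Suc k) / \<phi> (b (Suc k))" using P0 by metis
    also have "\<dots> \<le> s (Suc k) / \<phi> (s (Suc k))" using Q(3)[OF bO conjunct1[OF sO] F1(2)] .
    also have "\<dots> \<le> Qk k / 2^(k+2)" using F2(3) .
    also have "\<dots> \<le> Qk k"
    proof -
      have "(1::real) \<le> 2^(k+2)" by (rule one_le_power) simp
      hence "Qk k * 1 \<le> Qk k * 2^(k+2)" using Q0[of k] by (intro mult_left_mono) auto
      thus ?thesis by (simp add: pos_divide_le_eq)
    qed
    finally show ?thesis .
  qed
  have Qanti: "Qk i \<le> Qk k" if "k \<le> i" for i k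
  proof -
    have "decseq Qk" using Qdec by (intro decseq_SucI)
    thus ?thesis using that by (auto simp: decseq_def)
  qed
  have deeper: "set_nn_integral lborel {0<..s (Suc k)} (\<lambda>x. ennreal (blkk s c x)) \<le> ennreal (Qk k)" for k
  proof -
    have "set_nn_integral lborel {0<..s (Suc k)} (\<lambda>x. ennreal (blkk s c x))
        \<le> (\<Sum>i. ennreal (c i) * emeasure lborel ({s (Suc i)<..s i} \<inter> {0<..s (Suc k)}))"
      by (rule int_series[OF good cnn])
    also have "\<dots> \<le> (\<Sum>i. ennreal (Qk k * (1/2)^Suc i))"
    proof (rule suminf_le)
      fix i
      show "ennreal (c i) * emeasure lborel ({s (Suc i)<..s i} \<inter> {0<..s (Suc k)}) \<le> ennreal (Qk k * (1/2)^Suc i)"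
      proof (cases "i \<le> k")
        case True
        have "s (Suc k) \<le> s (Suc i)" using good_dec[OF good] True by simp
        hence "{s (Suc i)<..s i} \<inter> {0<..s (Suc k)} = {}" by auto
        hence "emeasure lborel ({s (Suc i)<..s i} \<inter> {0<..s (Suc k)}) = 0" by (simp only: emeasure_empty)
        thus ?thesis by simp
      next
        case False
        then obtain i' where i': "i = Suc i'" "k \<le> i'" by (cases i) auto
        have "emeasure lborel ({s (Suc i)<..s i} \<inter> {0<..s (Suc k)}) \<le> emeasure lborel {s (Suc i)<..s i}"
          by (rule emeasure_mono) auto
        also have "\<dots> = ennreal (d i)" using sdec[of i] by (simp add: d_def)
        finally have "ennreal (c i) * emeasure lborel ({s (Suc i)<..s i} \<inter> {0<..s (Suc k)}) \<le> ennreal (c i) * ennreal (d i)"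
          by (rule mult_left_mono) simp
        also have "\<dots> = ennreal (c i * d i)" using cnn[of i] dpos[of i] by (simp add: ennreal_mult)
        also have "\<dots> \<le> ennreal (Qk k * (1/2)^Suc i)"
        proof (rule ennreal_leI)
          have "0 \<le> d i / \<phi> (d i)" using dpos[of i] phipos[OF dO, of i] by (intro divide_nonneg_pos) auto
          hence "(1 - \<eta> i) * (d i / \<phi> (d i)) \<le> 1 * (d i / \<phi> (d i))" using eta[of i]
            by (intro mult_right_mono) auto
          hence "c i * d i \<le> d i / \<phi> (d i)" unfolding cd by (simp only: mult_1)
          also have "\<dots> \<le> s i / \<phi> (s i)" using Q(3)[OF dO conjunct1[OF sO]] sdec[of i] spos[of "Suc i"] by (simp add: d_def)
          also have "\<dots> \<le> Qk i' / 2^(i'+2)" using F2(3)[of i'] i' by simp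
          also have "\<dots> \<le> Qk k / 2^(i'+2)" using Qanti[OF i'(2)] by (simp add: divide_right_mono)
          also have "\<dots> = Qk k * (1/2)^Suc i" using i' by (simp add: power_one_over field_simps)
          finally show "c i * d i \<le> Qk k * (1/2)^Suc i" .
        qed
        finally show ?thesis .
      qed
    qed simp_all
    also have "\<dots> = ennreal (Qk k * 1)"
      using Q0[of k] by (intro suminf_ennreal_eq sums_mult power_half_series) auto
    finally show ?thesis by simp
  qed
  show ?thesis
  proof (rule general_embed[where c=c and s=s, OF Omeq qc good conjunct1[OF sO[of 0]] cnn cmono])
    fix t assume tO: "t \<in> \<Omega>"
    have t0: "0 < t" using tO Om(1) by auto
    have exb: "\<exists>n. b n \<le> t"
    proof -
      have "eventually (\<lambda>n. s n < t) sequentially" using good t0 unfolding good_def by (auto intro: order_tendstoD)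
      then obtain n where "s n < t" by (auto simp: eventually_sequentially)
      thus ?thesis using F1(2)[of n] by (intro exI[of _ n]) auto
    qed
    define k where "k = (LEAST n. b n \<le> t)"
    have kb: "b k \<le> t" unfolding k_def using exb by (rule LeastI_ex)
    have kprev: "t < b k'" if "k = Suc k'" for k'
    proof -
      have "k' < k" using that by simp
      hence "\<not> b k' \<le> t" unfolding k_def by (rule not_less_Least)
      thus ?thesis by simp
    qed
    define c' where "c' = (if k = 0 then 0 else c (k - 1))"
    have c'nn: "0 \<le> c'" using cnn by (simp add: c'_def)
    define R where "R x = ennreal (blkk s c x) * indicator {0<..s (Suc k)} x
        + ennreal (c k) * indicator {s (Suc k)<..min t (s k)} x + ennreal c' * indicator {s k<..t} x" for x
    have pw: "ennreal (blkk s c x) * indicator {0<..t} x \<le> R x" for x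
    proof (cases "0 < x \<and> x \<le> t")
      case False
      hence "indicator {0<..t} x = (0::ennreal)" by (auto simp: indicator_def)
      thus ?thesis by simp
    next
      case True
      hence x0: "0 < x" and xt: "x \<le> t" by auto
      show ?thesis
      proof (cases "x \<le> s (Suc k)")
        case True
        have "R x = ennreal (blkk s c x)" using True x0 sdec[of k] by (simp add: R_def indicator_def)
        thus ?thesis using x0 xt by simp
      next
        case G1: False
        show ?thesis
        proof (cases "x \<le> min t (s k)")
          case True
          have "blkJ s x = k" using blkJ_eq[OF good] G1 True by simp
          moreover have "x \<le> s 0" using True good_dec[OF good, of 0 k] by simp
          ultimately have "blkk s c x = c k" using x0 by (simp add: blkk_def)
          moreover have "R x = ennreal (c k)" using True G1 x0 by (simp add: R_def indicator_def)
          ultimately show ?thesis using x0 xt by simp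
        next
          case False
          hence xsk: "s k < x" using xt by auto
          show ?thesis
          proof (cases k)
            case 0
            hence "blkk s c x = 0" using xsk by (simp add: blkk_def)
            thus ?thesis by simp
          next
            case (Suc k')
            have "x < b k'" using kprev[OF Suc] xt by simp
            hence "x \<le> s k'" using F1(2)[of k'] by simp
            hence "blkJ s x = k'" using blkJ_eq[OF good, of k' x] xsk Suc by simp
            moreover have "x \<le> s 0" using \<open>x \<le> s k'\<close> good_dec[OF good, of 0 k'] by simp
            ultimately have "blkk s c x = c'" using x0 Suc by (simp add: blkk_def c'_def)
            moreover have "R x = ennreal c'" using xsk xt sdec[of k] by (simp add: R_def indicator_def)
            ultimately show ?thesis using x0 xt by simp
          qed
        qed
      qed
    qed
    have [measurable]: "blkk s c \<in> borel_measurable borel" by (rule blkk_meas)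
    have "set_nn_integral lborel {0<..t} (\<lambda>x. ennreal (blkk s c x)) \<le> integral\<^sup>N lborel R"
      by (rule nn_integral_mono) (rule pw)
    also have "integral\<^sup>N lborel R = set_nn_integral lborel {0<..s (Suc k)} (\<lambda>x. ennreal (blkk s c x))
        + ennreal (c k) * emeasure lborel {s (Suc k)<..min t (s k)} + ennreal c' * emeasure lborel {s k<..t}"
      unfolding R_def by (simp add: nn_integral_add nn_integral_cmult_indicator)
    also have "\<dots> \<le> ennreal (Qk k) + ennreal (c k) * ennreal (min t (d k)) + ennreal c' * ennreal t"
    proof (intro add_mono mult_left_mono deeper)
      show "emeasure lborel {s (Suc k)<..min t (s k)} \<le> ennreal (min t (d k))"
      proof (cases "s (Suc k) \<le> min t (s k)")
        case True
        hence "emeasure lborel {s (Suc k)<..min t (s k)} = ennreal (min t (s k) - s (Suc k))" by simp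
        also have "\<dots> \<le> ennreal (min t (d k))" using spos[of "Suc k"] by (intro ennreal_leI) (auto simp: d_def)
        finally show ?thesis .
      next
        case False
        hence "{s (Suc k)<..min t (s k)} = {}" by auto
        hence "emeasure lborel {s (Suc k)<..min t (s k)} = 0" by (simp only: emeasure_empty)
        thus ?thesis by simp
      qed
      have "emeasure lborel {s k<..t} \<le> emeasure lborel {0<..t}" using spos[of k] by (intro emeasure_mono) auto
      thus "emeasure lborel {s k<..t} \<le> ennreal t" using t0 by simp
    qed simp_all
    also have "\<dots> = ennreal (Qk k + c k * min t (d k) + c' * t)"
      using Q0[of k] cnn[of k] c'nn t0 dpos[of k]
      by (simp add: ennreal_mult[symmetric] ennreal_plus[symmetric] del: ennreal_plus)
    also have "\<dots> \<le> ennreal (t / \<phi> t)"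
    proof (rule ennreal_leI)
      have A: "Qk k \<le> \<eta> k * (t / \<phi> t) / 2"
      proof -
        have "\<eta> k * (b k / \<phi> (b k)) \<le> \<eta> k * (t / \<phi> t)"
          using Q(3)[OF bO tO kb] eta[of k] by (intro mult_left_mono) auto
        thus ?thesis unfolding Qk_def by (rule divide_right_mono) simp
      qed
      have B: "c k * min t (d k) \<le> (1 - \<eta> k) * (t / \<phi> t)"
      proof (cases "t \<le> d k")
        case True
        have "\<phi> t \<le> \<phi> (d k)" using Q(1)[OF tO dO True] .
        hence "t / \<phi> (d k) \<le> t / \<phi> t" using phipos[OF tO] t0 by (intro divide_left_mono) auto
        hence "(1 - \<eta> k) * (t / \<phi> (d k)) \<le> (1 - \<eta> k) * (t / \<phi> t)"
          using eta[of k] by (intro mult_left_mono) auto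
        moreover have "c k * min t (d k) = (1 - \<eta> k) * (t / \<phi> (d k))" using True by (simp add: c_def)
        ultimately show ?thesis by simp
      next
        case False
        have "d k / \<phi> (d k) \<le> t / \<phi> t" using Q(3)[OF dO tO] False by simp
        hence "(1 - \<eta> k) * (d k / \<phi> (d k)) \<le> (1 - \<eta> k) * (t / \<phi> t)"
          using eta[of k] by (intro mult_left_mono) auto
        moreover have "c k * min t (d k) = c k * d k" using False by simp
        ultimately show ?thesis using cd[of k] by simp
      qed
      have C: "c' * t \<le> \<eta> k * (t / \<phi> t) / 2"
      proof (cases k)
        case 0 thus ?thesis using eta[of k] t0 phipos[OF tO] by (simp add: c'_def)
      next
        case (Suc k')
        have c'le: "c' \<le> 1 / \<phi> (s k' / 2)"
        proof -
          have "\<phi> (s k' / 2) \<le> \<phi> (d k')" using Q(1)[OF s2O dO dge] .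
          hence "(1 - \<eta> k') / \<phi> (d k') \<le> 1 / \<phi> (s k' / 2)"
            using eta[of k'] phipos[OF s2O] by (intro frac_le) auto
          thus ?thesis using Suc by (simp add: c'_def c_def)
        qed
        have "\<phi> t \<le> \<phi> (b k')" using Q(1)[OF tO bO] kprev[OF Suc] by simp
        also have "\<dots> \<le> \<eta> k * \<phi> (s k' / 2) / 2" using F1(3)[of k'] Suc by simp
        finally have pt: "\<phi> t \<le> \<eta> k * \<phi> (s k' / 2) / 2" .
        have "c' * t \<le> (1 / \<phi> (s k' / 2)) * t" using c'le t0 by (intro mult_right_mono) auto
        also have "\<dots> = t / \<phi> (s k' / 2)" by simp
        also have "\<dots> \<le> \<eta> k * (t / \<phi> t) / 2"
          using pt phipos[OF tO] phipos[OF s2O] t0 eta[of k] by (simp add: field_simps mult_left_mono)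
        finally show ?thesis .
      qed
      have "\<eta> k * (t / \<phi> t) / 2 + (1 - \<eta> k) * (t / \<phi> t) + \<eta> k * (t / \<phi> t) / 2 = t / \<phi> t"
        by (simp add: algebra_simps add_divide_distrib[symmetric])
      with A B C show "Qk k + c k * min t (d k) + c' * t \<le> t / \<phi> t" by linarith
    qed
    finally show "set_nn_integral lborel {0<..t} (\<lambda>x. ennreal (blkk s c x)) \<le> ennreal (t / \<phi> t)" .
  next
    fix \<epsilon> :: real assume e: "0 < \<epsilon>"
    obtain J where J: "(1/2::real)^J < \<epsilon>" using real_arch_pow_inv[OF e, of "1/2"] by auto
    show "\<exists>J. \<forall>j\<ge>J. 1 - \<epsilon> \<le> c j * \<phi> (s j - s (Suc j))"
    proof (intro exI[of _ J] allI impI)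
      fix j assume jJ: "J \<le> j"
      have "\<eta> j \<le> (1/2)^J" unfolding \<eta>_def using jJ by (intro power_decreasing) auto
      moreover have "c j * \<phi> (s j - s (Suc j)) = 1 - \<eta> j"
        using phipos[OF dO[of j]] by (simp add: c_def d_def)
      ultimately show "1 - \<epsilon> \<le> c j * \<phi> (s j - s (Suc j))" using J by simp
    qed
  qed
qed


theorem corollary3p9:
  fixes \<Omega> :: "real set" and \<phi> :: "real \<Rightarrow> real"
  assumes "\<Omega> = {0<..<1} \<or> \<Omega> = {0<..}"
    and "quasi_concave_on \<Omega> \<phi>"
    and "((\<lambda>t. t / \<phi> t) \<longlongrightarrow> 0) (at_right 0)"
  shows "\<exists>T. lattice_isometric_embedding \<Omega> \<phi> T"
proof (cases "\<exists>a>0. \<forall>t\<in>\<Omega>. a \<le> \<phi> t")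
  case True
  then obtain a0 where a0: "0 < a0" "\<And>t. t \<in> \<Omega> \<Longrightarrow> a0 \<le> \<phi> t" by auto
  have "(1/2::real) \<in> \<Omega>" using assms(1) by auto
  hence ne: "\<phi> ` \<Omega> \<noteq> {}" by auto
  have bdd: "bdd_below (\<phi> ` \<Omega>)" using a0 by (intro bdd_belowI[of _ a0]) auto
  define a where "a = Inf (\<phi> ` \<Omega>)"
  have "a0 \<le> a" unfolding a_def using ne a0 by (intro cInf_greatest) auto
  hence apos: "0 < a" using a0 by simp
  have alow: "\<And>t. t \<in> \<Omega> \<Longrightarrow> a \<le> \<phi> t" unfolding a_def using bdd by (intro cInf_lower) auto
  have ainf: "\<exists>t\<in>\<Omega>. \<phi> t < a + e" if e: "0 < e" for e
  proof -
    have "Inf (\<phi> ` \<Omega>) < a + e" using e by (simp add: a_def)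
    thus ?thesis using cInf_less_iff[OF ne bdd] by auto
  qed
  show ?thesis by (rule caseB[OF assms(1,2) apos alow ainf])
next
  case False
  have phi0: "\<exists>t\<in>\<Omega>. \<phi> t < e" if e: "0 < e" for e
    using False e by (auto simp: not_le)
  show ?thesis by (rule caseA[OF assms(1,2) phi0 assms(3)])
qed

end
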